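(* Fix a binary instance $(\mu_0,\hat q)$. There is a constant $C<\infty$, depending only on $(\mu_0,\hat q)$, with the following property. For every horizon $T\ge 2$ and every bias $\alpha^\star\in(0,1]$, the Binary Search policy satisfies $\mathrm{Reg}_T(\mathrm{BS};\alpha^\star)\le C\log T$. More precisely, suppose $\alpha^\star\ge\alpha_{\min}$, and write $\nu^\star=\nu_B(\alpha^\star)$, $L_\nu=\frac{(1-\mu_0)^2}{\hat q-\mu_0}$ and $L_W=\frac{\mu_0(1-\mu_0)^2}{\hat q-\mu_0}$. Then $$\mathrm{Reg}_T\le \lceil 2\log_2T\rceil+\frac{L_\nu(1-\alpha_{\min})}{\nu^\star}+L_W(1-\alpha_{\min}).$$ If instead $\alpha^\star<\alpha_{\min}$, the regret is $0$.
   Context: Binary model: states $\Omega=\{0,1\}$, actions $A=\{0,1\}$, prior $\mu_0=\Pr(\omega=1)\in(0,1)$, cutoff $\hat q\in(\mu_0,1)$, sender utility $u_S(a,\omega)=\mathbf 1\{a=1\}$. A receiver with fixed bias $\alpha^\star\in(0,1]$, unknown to the sender, takes action $1$ after Bayesian posterior $\nu=\Pr(\omega=1\mid s)$ iff $(1-\alpha^\star)\mu_0+\alpha^\star\nu\ge\hat q$. Define $\nu_B(\alpha)=\mu_0+(\hat q-\mu_0)/\alpha$ and $\alpha_{\min}=(\hat q-\mu_0)/(1-\mu_0)$. For $\alpha\in[\alpha_{\min},1]$, let $\tau(\alpha)$ be the Bayes-plausible scheme with mass $1-\mu_0/\nu_B(\alpha)$ on posterior $0$ and mass $\mu_0/\nu_B(\alpha)$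 on posterior $\nu_B(\alpha)$. Repeated interaction over $T$ rounds. In each round $t$: - The sender commits to a Bayes-plausible posterior distribution (a mean-$\mu_0$ distribution on $[0,1]$). - The state $\omega_t\sim\mu_0$ is drawn and a posterior $\nu_t$ is realized from the committed distribution, consistently with $\omega_t$. - The receiver acts, and the sender observes $\nu_t$ and the action. Let $\mathrm{OPT}(\alpha^\star)$ be the supremum, over Bayes-plausible distributions, of the probability that the realized posterior induces action $1$. The regret is $\mathrm{Reg}_T=T\cdot\mathrm{OPT}(\alpha^\star)-\sum_{t=1}^T\mathbb E[\Pr(\text{action }1\text{ in round }t\mid\text{history})]$. Binary Search (BS) policy: initialize $[\underline\alpha,\overline\alpha]=[\alpha_{\min},1]$, $k=0$, and $M=\lceil 2\log_2T\rceil$. While $k<M$ and rounds remain, set $m$ to the midpoint of $[\underline\alpha,\overline\alpha]$ and play $\tau(m)$. Whenever the realized posterior is nonzero: - if the receiver chooses action $1$, set $\underline\alpha\gets m$; otherwise set $\overline\alpha\gets m$; - then increment $k$. Afterwards, play $\tau(\underline\alpha)$ in all remaining rounds. *)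

theory Defs
  imports "HOL-Probability.Probability"
begin

definition acts1 :: "real \<Rightarrow> real \<Rightarrow> real \<Rightarrow> real \<Rightarrow> bool" where
  "acts1 mu0 qhat alpha nu \<longleftrightarrow> (1 - alpha) * mu0 + alpha * nu \<ge> qhat"

definition nuB :: "real \<Rightarrow> real \<Rightarrow> real \<Rightarrow> real" where
  "nuB mu0 qhat alpha = mu0 + (qhat - mu0) / alpha"

definition alpha_min :: "real \<Rightarrow> real \<Rightarrow> real" where
  "alpha_min mu0 qhat = (qhat - mu0) / (1 - mu0)"

definition bayes_plausible :: "real \<Rightarrow> real measure \<Rightarrow> bool" where
  "bayes_plausible mu0 P \<longleftrightarrow>
     prob_space P \<and> sets P = sets borel \<and>
     (AE x in P. 0 \<le> x \<and> x \<le> 1) \<and> integrable P (\<lambda>x. x) \<and> (\<integral>x. x \<partial>P) = mu0"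

definition OPT :: "real \<Rightarrow> real \<Rightarrow> real \<Rightarrow> real" where
  "OPT mu0 qhat alpha =
     Sup {measure P {nu. acts1 mu0 qhat alpha nu} | P. bayes_plausible mu0 P}"

definition tau :: "real \<Rightarrow> real \<Rightarrow> real \<Rightarrow> real pmf" where
  "tau mu0 qhat alpha =
     map_pmf (\<lambda>b. if b then nuB mu0 qhat alpha else 0)
             (bernoulli_pmf (mu0 / nuB mu0 qhat alpha))"

text \<open>State of the Binary Search policy: (lower end, upper end, counter k).\<close>
type_synonym bs_state = "real \<times> real \<times> nat"

text \<open>Parameter alpha of the scheme played in the given state (M = number of search steps).\<close>
definition bs_param :: "nat \<Rightarrow> bs_state \<Rightarrow> real" where
  "bs_param M s = (case s of (lo, hi, k) \<Rightarrow> if k < M then (lo + hi) / 2 else lo)"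

definition bs_next :: "real \<Rightarrow> real \<Rightarrow> real \<Rightarrow> nat \<Rightarrow> bs_state \<Rightarrow> real \<Rightarrow> bs_state" where
  "bs_next mu0 qhat astar M s nu = (case s of (lo, hi, k) \<Rightarrow>
     if k < M \<and> nu \<noteq> 0 then
       (let m = (lo + hi) / 2 in
        if acts1 mu0 qhat astar nu then (m, hi, Suc k) else (lo, m, Suc k))
     else s)"

text \<open>Conditional probability of action 1 in a round, given the history (summarized by the state).\<close>
definition bs_reward :: "real \<Rightarrow> real \<Rightarrow> real \<Rightarrow> nat \<Rightarrow> bs_state \<Rightarrow> real" where
  "bs_reward mu0 qhat astar M s =
     measure_pmf.prob (tau mu0 qhat (bs_param M s)) {nu. acts1 mu0 qhat astar nu}"

text \<open>Expected sum, over n remaining rounds, of the conditional probabilities of action 1,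
  starting from state s (the expectation is over realized posteriors).\<close>
primrec bs_value :: "real \<Rightarrow> real \<Rightarrow> real \<Rightarrow> nat \<Rightarrow> nat \<Rightarrow> bs_state \<Rightarrow> real" where
  "bs_value mu0 qhat astar M 0 s = 0"
| "bs_value mu0 qhat astar M (Suc n) s =
     bs_reward mu0 qhat astar M s +
     measure_pmf.expectation (tau mu0 qhat (bs_param M s))
       (\<lambda>nu. bs_value mu0 qhat astar M n (bs_next mu0 qhat astar M s nu))"

definition bs_M :: "nat \<Rightarrow> nat" where
  "bs_M T = nat \<lceil>2 * log 2 (real T)\<rceil>"

definition regret_BS :: "real \<Rightarrow> real \<Rightarrow> nat \<Rightarrow> real \<Rightarrow> real" where
  "regret_BS mu0 qhat T astar =
     real T * OPT mu0 qhat astar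
     - bs_value mu0 qhat astar (bs_M T) T (alpha_min mu0 qhat, 1, 0)"

end

theory Submission
  imports Defs
begin

lemma tau_exp:
  fixes g :: "real \<Rightarrow> real"
  assumes "0 \<le> mu0 / nuB mu0 qhat a" "mu0 / nuB mu0 qhat a \<le> 1"
  shows "measure_pmf.expectation (tau mu0 qhat a) g
     = (mu0 / nuB mu0 qhat a) * g (nuB mu0 qhat a) + (1 - mu0 / nuB mu0 qhat a) * g 0"
  unfolding tau_def using assms by simp

lemma tau_prob:
  assumes "0 \<le> mu0 / nuB mu0 qhat a" "mu0 / nuB mu0 qhat a \<le> 1"
  shows "measure_pmf.prob (tau mu0 qhat a) S
     = (mu0 / nuB mu0 qhat a) * (if nuB mu0 qhat a \<in> S then 1 else 0)
       + (1 - mu0 / nuB mu0 qhat a) * (if 0 \<in> S then 1 else 0)" (is "_ = ?R")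
proof -
  have "measure_pmf.prob (tau mu0 qhat a) S = measure_pmf.expectation (tau mu0 qhat a) (indicator S)"
    by simp
  also have "\<dots> = ?R" by (subst tau_exp[OF assms]) (simp add: indicator_def)
  finally show ?thesis .
qed

lemma acts1_iff:
  assumes "0 < a"
  shows "acts1 mu0 qhat a nu \<longleftrightarrow> nuB mu0 qhat a \<le> nu"
proof -
  have "acts1 mu0 qhat a nu \<longleftrightarrow> qhat - mu0 \<le> a * (nu - mu0)"
    unfolding acts1_def by (simp add: algebra_simps)
  also have "\<dots> \<longleftrightarrow> (qhat - mu0) / a \<le> nu - mu0"
    using assms by (simp add: divide_le_eq mult.commute)
  finally show ?thesis unfolding nuB_def by linarith
qed

lemma nuB_le_iff:
  assumes "0 < m" "0 < b" "mu0 < qhat"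
  shows "nuB mu0 qhat b \<le> nuB mu0 qhat m \<longleftrightarrow> m \<le> b"
proof -
  have "(qhat - mu0) / b \<le> (qhat - mu0) / m \<longleftrightarrow> m * (qhat - mu0) \<le> b * (qhat - mu0)"
    using assms by (simp add: field_simps)
  also have "\<dots> \<longleftrightarrow> m \<le> b" using assms by simp
  finally show ?thesis unfolding nuB_def by simp
qed

context
  fixes mu0 qhat astar :: real and M :: nat
  assumes mu0: "0 < mu0" and mq: "mu0 < qhat" and q1: "qhat < 1"
begin

lemma am_pos: "0 < alpha_min mu0 qhat" and am_lt1: "alpha_min mu0 qhat < 1"
  using mu0 mq q1 unfolding alpha_min_def by (auto simp: field_simps)


lemma nuB_ge: assumes "0 < a" "a \<le> 1" shows "qhat \<le> nuB mu0 qhat a"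
proof -
  have "qhat - mu0 \<le> (qhat - mu0) / a" using assms mq by (simp add: field_simps) (meson affine_ineq less_eq_real_def)
  then show ?thesis unfolding nuB_def by linarith
qed

lemma nuB_le1: assumes "alpha_min mu0 qhat \<le> a" shows "nuB mu0 qhat a \<le> 1"
proof -
  have a: "0 < a" using am_pos assms by linarith
  have "0 < 1 - mu0" using mq q1 by simp
  then have "qhat - mu0 \<le> a * (1 - mu0)" using assms unfolding alpha_min_def
    by (simp add: pos_divide_le_eq)
  then have "(qhat - mu0) / a \<le> 1 - mu0" using a by (simp add: field_simps)
  then show ?thesis unfolding nuB_def by linarith
qed

lemma p_bounds: assumes "alpha_min mu0 qhat \<le> a" "a \<le> 1"
  shows "0 < mu0 / nuB mu0 qhat a" "mu0 / nuB mu0 qhat a \<le> 1"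
proof -
  have a: "0 < a" using am_pos assms by linarith
  have n1: "qhat \<le> nuB mu0 qhat a" using nuB_ge[OF a assms(2)] .
  then show "0 < mu0 / nuB mu0 qhat a" using mu0 mq by simp
  show "mu0 / nuB mu0 qhat a \<le> 1" using n1 mu0 mq by (simp add: divide_le_eq)
qed

lemma nz: "1 - mu0 \<noteq> 0" "qhat - mu0 \<noteq> 0" "1 - mu0 > 0" "qhat - mu0 > 0"
  using mq q1 by auto

lemma lip_nu: assumes "alpha_min mu0 qhat \<le> m" "m \<le> b"
  shows "nuB mu0 qhat m - nuB mu0 qhat b \<le> ((1 - mu0)\<^sup>2 / (qhat - mu0)) * (b - m)"
proof -
  define am where "am = alpha_min mu0 qhat"
  define c where "c = qhat - mu0"
  have am: "0 < am" using am_pos am_def by simp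
  have c: "0 < c" using mq c_def by simp
  have m: "0 < m" using am assms am_def by linarith
  have b: "0 < b" using m assms by linarith
  have "nuB mu0 qhat m - nuB mu0 qhat b = c * (b - m) / (m * b)"
    unfolding nuB_def c_def using m b by (simp add: field_simps)
  also have "\<dots> \<le> c * (b - m) / (am * am)"
  proof (rule divide_left_mono)
    show "0 \<le> c * (b - m)" using c assms by simp
    show "am * am \<le> m * b" using assms am_def am by (intro mult_mono) auto
    show "0 < m * b * (am * am)" using m b am by simp
  qed
  also have "c / (am * am) = (1 - mu0)\<^sup>2 / (qhat - mu0)"
  proof -
    have amv: "am = c / (1 - mu0)" unfolding am_def alpha_min_def c_def ..
    have "c \<noteq> 0" "1 - mu0 \<noteq> 0" using c nz by auto
    then show ?thesis unfolding c_def[symmetric] amv by (simp add: field_simps power2_eq_square)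
  qed
  then have "c * (b - m) / (am * am) = ((1 - mu0)\<^sup>2 / (qhat - mu0)) * (b - m)"
    by (metis times_divide_eq_left mult.commute)
  finally show ?thesis .
qed

lemma lip_p: assumes "alpha_min mu0 qhat \<le> a" "a \<le> b"
  shows "mu0 / nuB mu0 qhat b - mu0 / nuB mu0 qhat a \<le> (mu0 * (1 - mu0)\<^sup>2 / (qhat - mu0)) * (b - a)"
proof -
  define am where "am = alpha_min mu0 qhat"
  define c where "c = qhat - mu0"
  have am: "0 < am" using am_pos am_def by simp
  have c: "0 < c" using mq c_def by simp
  have a: "0 < a" using am assms am_def by linarith
  have b: "0 < b" using a assms by linarith
  have amc: "mu0 * am + c = am" unfolding am_def alpha_min_def c_def using q1 mq
    by (simp add: field_simps)
  have da: "am \<le> mu0 * a + c" using amc assms am_def mu0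
    by (smt (verit) mult_left_mono)
  have db: "am \<le> mu0 * b + c" using amc assms am_def mu0
    by (smt (verit) mult_left_mono)
  have px: "mu0 / nuB mu0 qhat x = mu0 * x / (mu0 * x + c)" if "0 < x" for x
  proof -
    have "nuB mu0 qhat x = (mu0 * x + c) / x" unfolding nuB_def c_def using that
      by (simp add: field_simps)
    then show ?thesis using that by simp
  qed
  have Da: "0 < mu0 * a + c" and Db: "0 < mu0 * b + c" using da db am by auto
  have "mu0 / nuB mu0 qhat b - mu0 / nuB mu0 qhat a = mu0 * c * (b - a) / ((mu0 * b + c) * (mu0 * a + c))"
    unfolding px[OF a] px[OF b] using Da Db
    by (simp add: field_simps)
  also have "\<dots> \<le> mu0 * c * (b - a) / (am * am)"
  proof (rule divide_left_mono)
    show "0 \<le> mu0 * c * (b - a)" using c assms mu0 by simp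
    show "am * am \<le> (mu0 * b + c) * (mu0 * a + c)" using da db am by (intro mult_mono) auto
    show "0 < (mu0 * b + c) * (mu0 * a + c) * (am * am)" using da db am by simp
  qed
  also have "mu0 * c / (am * am) = mu0 * (1 - mu0)\<^sup>2 / (qhat - mu0)"
  proof -
    have amv: "am = c / (1 - mu0)" unfolding am_def alpha_min_def c_def ..
    have "c \<noteq> 0" "1 - mu0 \<noteq> 0" using c nz by auto
    then show ?thesis unfolding c_def[symmetric] amv by (simp add: field_simps power2_eq_square)
  qed
  then have "mu0 * c * (b - a) / (am * am) = (mu0 * (1 - mu0)\<^sup>2 / (qhat - mu0)) * (b - a)"
    by (metis times_divide_eq_left mult.commute)
  finally show ?thesis .
qed


context
  assumes am_le: "alpha_min mu0 qhat \<le> astar" and a1: "astar \<le> 1"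
begin

lemma astar_pos: "0 < astar" using am_pos am_le by linarith

lemma acts_nuB: assumes "0 < m"
  shows "acts1 mu0 qhat astar (nuB mu0 qhat m) \<longleftrightarrow> m \<le> astar"
  using acts1_iff[OF astar_pos] nuB_le_iff[OF assms astar_pos mq] by simp

lemma not_acts_0: "\<not> acts1 mu0 qhat astar 0"
  using acts1_iff[OF astar_pos] nuB_ge[OF astar_pos a1] mu0 mq by simp

lemma main_bound:
  assumes "alpha_min mu0 qhat \<le> lo" "lo \<le> astar" "astar \<le> hi" "hi \<le> 1" "k \<le> M"
    "hi - lo = (1 - alpha_min mu0 qhat) / 2 ^ k"
  shows "real n * (mu0 / nuB mu0 qhat astar) - bs_value mu0 qhat astar M n (lo, hi, k)
    \<le> real (M - k) + ((1 - mu0)\<^sup>2 / (qhat - mu0)) * (hi - lo) / nuB mu0 qhat astar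
      + real n * ((mu0 * (1 - mu0)\<^sup>2 / (qhat - mu0)) * (1 - alpha_min mu0 qhat) / 2 ^ M)"
  using assms
proof (induction n arbitrary: lo hi k)
  case 0
  have "0 \<le> ((1 - mu0)\<^sup>2 / (qhat - mu0)) * (hi - lo) / nuB mu0 qhat astar"
    using 0 nz nuB_ge[OF astar_pos a1] mq mu0 by simp
  then show ?case by simp
next
  case (Suc n)
  define am where "am = alpha_min mu0 qhat"
  define nus where "nus = nuB mu0 qhat astar"
  define ps where "ps = mu0 / nus"
  define Lnu where "Lnu = (1 - mu0)\<^sup>2 / (qhat - mu0)"
  define LW where "LW = mu0 * (1 - mu0)\<^sup>2 / (qhat - mu0)"
  define V where "V = bs_value mu0 qhat astar M n"
  define E where "E = LW * (1 - am) / 2 ^ M"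
  have nus: "qhat \<le> nus" unfolding nus_def using nuB_ge[OF astar_pos a1] .
  have nuspos: "0 < nus" using nus mu0 mq by linarith
  have Lnu: "0 < Lnu" unfolding Lnu_def using nz by simp
  have E: "0 \<le> E" unfolding E_def LW_def am_def using nz mu0 am_lt1 by simp
  have am: "0 < am" "am < 1" using am_pos am_lt1 am_def by auto
  define Phi where "Phi = (\<lambda>(l::real) (h::real) (j::nat). real (M - j) + Lnu * (h - l) / nus + real n * E)"
  have IH: "real n * ps - V (l, h, j) \<le> Phi l h j"
    if "am \<le> l" "l \<le> astar" "astar \<le> h" "h \<le> 1" "j \<le> M" "h - l = (1 - am) / 2 ^ j" for l h j
    using Suc.IH[of l h j] that unfolding Phi_def V_def ps_def nus_def Lnu_def E_def LW_def am_def
    by (simp add: mult.assoc)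
  have PE: "Phi lo hi k + E = real (M - k) + Lnu * (hi - lo) / nus + real (Suc n) * E"
    unfolding Phi_def by (simp add: algebra_simps)
  have goal_form: "real (Suc n) * ps - bs_value mu0 qhat astar M (Suc n) (lo, hi, k) \<le> Phi lo hi k + E
      \<Longrightarrow> ?case"
    unfolding PE unfolding ps_def nus_def Lnu_def E_def LW_def am_def by assumption
  show ?case
  proof (rule goal_form, cases "k < M")
    case True
    define m where "m = (lo + hi) / 2"
    define p where "p = mu0 / nuB mu0 qhat m"
    have m: "am \<le> m" "m \<le> 1" "lo \<le> m" "m \<le> hi" "0 < m" using Suc.prems am m_def am_def by auto
    have p: "0 < p" "p \<le> 1" using p_bounds[of m] m unfolding p_def am_def by auto
    have nuBm0: "nuB mu0 qhat m \<noteq> 0" using nuB_ge[of m] m mu0 mq by force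
    have par: "bs_param M (lo, hi, k) = m" unfolding bs_param_def m_def using True by simp
    have nx0: "bs_next mu0 qhat astar M (lo, hi, k) 0 = (lo, hi, k)"
      unfolding bs_next_def by simp
    have nx1: "bs_next mu0 qhat astar M (lo, hi, k) (nuB mu0 qhat m)
       = (if m \<le> astar then (m, hi, Suc k) else (lo, m, Suc k))"
      unfolding bs_next_def Let_def m_def[symmetric] using True nuBm0 acts_nuB[OF m(5)] by (simp add: m_def)
    have rew: "bs_reward mu0 qhat astar M (lo, hi, k) = (if m \<le> astar then p else 0)"
      unfolding bs_reward_def par
      using tau_prob[of mu0 qhat m, folded p_def] p acts_nuB[OF m(5)] not_acts_0 by simp
    have val: "bs_value mu0 qhat astar M (Suc n) (lo, hi, k)
      = (if m \<le> astar then p else 0) + p * V (if m \<le> astar then (m, hi, Suc k) else (lo, m, Suc k))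
        + (1 - p) * V (lo, hi, k)"
      using tau_exp[of mu0 qhat m, folded p_def] p
      by (simp add: par rew nx0 nx1 V_def)
    have Y: "real n * ps - V (lo, hi, k) \<le> Phi lo hi k"
      using IH[of lo hi k] Suc.prems am_def by simp
    have Yp: "(1 - p) * (real n * ps - V (lo, hi, k)) \<le> (1 - p) * Phi lo hi k"
      using Y p by (intro mult_left_mono) auto
    have Mk: "real (M - k) = real (M - Suc k) + 1" using True by simp
    show "real (Suc n) * ps - bs_value mu0 qhat astar M (Suc n) (lo, hi, k) \<le> Phi lo hi k + E"
    proof (cases "m \<le> astar")
      case True
      have X: "real n * ps - V (m, hi, Suc k) \<le> Phi m hi (Suc k)"
      proof (rule IH)
        have "hi - m = (hi - lo) / 2" unfolding m_def by (simp add: field_simps)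
        then show "hi - m = (1 - am) / 2 ^ Suc k" using Suc.prems(6) am_def by simp
      qed (use Suc.prems m True \<open>k < M\<close> am_def in auto)
      have Xp: "p * (real n * ps - V (m, hi, Suc k)) \<le> p * Phi m hi (Suc k)"
        using X p by (intro mult_left_mono) auto
      have "nuB mu0 qhat m - nus \<le> Lnu * (astar - m)"
        using lip_nu[of m astar] m True unfolding nus_def Lnu_def am_def by simp
      also have "\<dots> \<le> Lnu * (m - lo)" using Lnu Suc.prems m_def
        by (intro mult_left_mono) auto
      finally have d1: "nuB mu0 qhat m - nus \<le> Lnu * (m - lo)" .
      have "ps - p = p * ((nuB mu0 qhat m - nus) / nus)"
        unfolding ps_def p_def using nuspos nuBm0 by (simp add: field_simps)
      also have "\<dots> \<le> p * (Lnu * (m - lo) / nus)"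
        using d1 p nuspos by (intro mult_left_mono divide_right_mono) auto
      finally have d2: "ps - p \<le> p * (Lnu * (m - lo) / nus)" .
      have "Phi lo hi k - Phi m hi (Suc k) = 1 + Lnu * (m - lo) / nus"
        unfolding Phi_def using Mk nuspos by (simp add: field_simps)
      then have "p * Phi m hi (Suc k) = p * Phi lo hi k - p - p * (Lnu * (m - lo) / nus)"
        by (simp add: algebra_simps)
      then show ?thesis using val True Xp Yp d2 E p by (simp add: algebra_simps)
    next
      case False
      have X: "real n * ps - V (lo, m, Suc k) \<le> Phi lo m (Suc k)"
      proof (rule IH)
        have "m - lo = (hi - lo) / 2" unfolding m_def by (simp add: field_simps)
        then show "m - lo = (1 - am) / 2 ^ Suc k" using Suc.prems(6) am_def by simp
      qed (use Suc.prems m False \<open>k < M\<close> am_def in auto)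
      have Xp: "p * (real n * ps - V (lo, m, Suc k)) \<le> p * Phi lo m (Suc k)"
        using X p by (intro mult_left_mono) auto
      have "nuB mu0 qhat m \<le> nus" unfolding nus_def
        using nuB_le_iff[OF astar_pos m(5) mq] False by simp
      then have d2: "ps \<le> p" unfolding ps_def p_def using nuBm0 nuB_ge[of m] m mu0 mq
        by (intro divide_left_mono) auto
      have "Phi lo hi k - Phi lo m (Suc k) = 1 + Lnu * (hi - m) / nus"
        unfolding Phi_def using Mk nuspos by (simp add: field_simps)
      then have e2: "p * Phi lo m (Suc k) = p * Phi lo hi k - p - p * (Lnu * (hi - m) / nus)"
        by (simp add: algebra_simps)
      have pd: "0 \<le> p * (Lnu * (hi - m) / nus)" using p Lnu nuspos m by simp
      have e1: "real (Suc n) * ps - bs_value mu0 qhat astar M (Suc n) (lo, hi, k)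
         = ps + p * (real n * ps - V (lo, m, Suc k)) + (1 - p) * (real n * ps - V (lo, hi, k))"
        unfolding val using False by (simp add: algebra_simps)
      have e3: "(1 - p) * Phi lo hi k = Phi lo hi k - p * Phi lo hi k" by (simp add: algebra_simps)
      show ?thesis unfolding e1 using Xp Yp e2 e3 pd d2 E by linarith
    qed
  next
    case False
    then have kM: "k = M" using Suc.prems by simp
    define p where "p = mu0 / nuB mu0 qhat lo"
    have lo: "0 < lo" using Suc.prems am am_def by simp
    have p: "0 < p" "p \<le> 1" using p_bounds[of lo] Suc.prems unfolding p_def am_def by auto
    have par: "bs_param M (lo, hi, k) = lo" unfolding bs_param_def using False by simp
    have nx: "bs_next mu0 qhat astar M (lo, hi, k) nu = (lo, hi, k)" for nu
      unfolding bs_next_def using False by simp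
    have rew: "bs_reward mu0 qhat astar M (lo, hi, k) = p"
      unfolding bs_reward_def par
      using tau_prob[of mu0 qhat lo, folded p_def] p acts_nuB[OF lo] not_acts_0 Suc.prems by simp
    have val: "bs_value mu0 qhat astar M (Suc n) (lo, hi, k) = p + V (lo, hi, k)"
      using tau_exp[of mu0 qhat lo, folded p_def] p
      by (simp add: par rew nx V_def algebra_simps)
    have Y: "real n * ps - V (lo, hi, k) \<le> Phi lo hi k"
      using IH[of lo hi k] Suc.prems am_def by simp
    have "ps - p \<le> LW * (astar - lo)"
      using lip_p[of lo astar] Suc.prems unfolding ps_def p_def nus_def LW_def by simp
    also have "\<dots> \<le> LW * (hi - lo)" using Suc.prems unfolding LW_def using nz mu0
      by (intro mult_left_mono) auto
    also have "\<dots> = E" unfolding E_def using Suc.prems kM am_def by simp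
    finally show "real (Suc n) * ps - bs_value mu0 qhat astar M (Suc n) (lo, hi, k) \<le> Phi lo hi k + E"
      using val Y by (simp add: algebra_simps)
  qed
qed

end



lemma value_zero:
  assumes "0 < astar" "astar < alpha_min mu0 qhat"
  shows "alpha_min mu0 qhat \<le> lo \<Longrightarrow> lo \<le> hi \<Longrightarrow> hi \<le> 1 \<Longrightarrow>
    bs_value mu0 qhat astar M n (lo, hi, k) = 0"
proof (induction n arbitrary: lo hi k)
  case 0
  then show ?case by simp
next
  case (Suc n)
  define a where "a = bs_param M (lo, hi, k)"
  have a: "alpha_min mu0 qhat \<le> a" "a \<le> 1" using Suc.prems unfolding a_def bs_param_def by auto
  have ap: "0 < a" using a am_pos by linarith
  have p: "0 < mu0 / nuB mu0 qhat a" "mu0 / nuB mu0 qhat a \<le> 1" using p_bounds[OF a] by auto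
  have nus: "qhat \<le> nuB mu0 qhat astar" using nuB_ge[OF assms(1)] assms(2) am_lt1 by simp
  have n1: "\<not> acts1 mu0 qhat astar (nuB mu0 qhat a)"
    using acts1_iff[OF assms(1)] nuB_le_iff[OF ap assms(1) mq] assms(2) a by simp
  have n0: "\<not> acts1 mu0 qhat astar 0"
    using acts1_iff[OF assms(1)] nus mu0 mq by simp
  have rew: "bs_reward mu0 qhat astar M (lo, hi, k) = 0"
    unfolding bs_reward_def a_def[symmetric] using tau_prob[OF less_imp_le[OF p(1)] p(2)] n1 n0
    by simp
  have nx: "bs_value mu0 qhat astar M n (bs_next mu0 qhat astar M (lo, hi, k) nu) = 0" for nu
  proof -
    have inv0: "case bs_next mu0 qhat astar M (lo, hi, k) nu of (l, h, j) \<Rightarrow>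
        alpha_min mu0 qhat \<le> l \<and> l \<le> h \<and> h \<le> 1"
    proof (cases "k < M \<and> nu \<noteq> 0")
      case True
      then show ?thesis using Suc.prems unfolding bs_next_def Let_def
        by (cases "acts1 mu0 qhat astar nu") simp_all
    next
      case False
      show ?thesis using Suc.prems unfolding bs_next_def prod.case if_not_P[OF False] by simp
    qed
    obtain l h j where e: "bs_next mu0 qhat astar M (lo, hi, k) nu = (l, h, j)"
      by (cases "bs_next mu0 qhat astar M (lo, hi, k) nu") auto
    have inv: "alpha_min mu0 qhat \<le> l" "l \<le> h" "h \<le> 1" using inv0 e by auto
    show ?thesis unfolding e by (rule Suc.IH[OF inv])
  qed
  show ?case by (simp add: rew nx)
qed

end

lemma return_bp: assumes "0 \<le> mu0" "mu0 \<le> 1" shows "bayes_plausible mu0 (return borel mu0)"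
proof -
  interpret prob_space "return borel mu0" by (rule prob_space_return) simp
  have ae1: "(AE x in return borel mu0. 0 \<le> x \<and> x \<le> 1) \<longleftrightarrow> 0 \<le> mu0 \<and> mu0 \<le> 1"
    by (rule AE_return) simp_all
  have ae2: "(AE x in return borel mu0. norm x \<le> \<bar>mu0\<bar>) \<longleftrightarrow> norm mu0 \<le> \<bar>mu0\<bar>"
    by (rule AE_return) simp_all
  have i: "integrable (return borel mu0) (\<lambda>x. x)"
    by (rule integrable_const_bound[where B="\<bar>mu0\<bar>"]) (use ae2 in simp_all)
  have int: "(\<integral>x. x \<partial>return borel mu0) = mu0"
    by (rule integral_return) simp_all
  show ?thesis unfolding bayes_plausible_def
    using assms i ae1 int prob_space_axioms by simp
qed

lemma space_bp: "bayes_plausible mu0 P \<Longrightarrow> space P = UNIV"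
  unfolding bayes_plausible_def using sets_eq_imp_space_eq[of P borel] by auto

lemma OPT_le:
  assumes "0 < mu0" "mu0 < 1" "0 < astar" "0 < nuB mu0 qhat astar"
  shows "OPT mu0 qhat astar \<le> mu0 / nuB mu0 qhat astar"
  unfolding OPT_def
proof (rule cSup_least)
  have bp: "bayes_plausible mu0 (return borel mu0)" using return_bp[of mu0] assms by simp
  then show "{measure P {nu. acts1 mu0 qhat astar nu} |P. bayes_plausible mu0 P} \<noteq> {}"
    by blast
  fix x assume "x \<in> {measure P {nu. acts1 mu0 qhat astar nu} |P. bayes_plausible mu0 P}"
  then obtain P where x: "x = measure P {nu. acts1 mu0 qhat astar nu}" and P: "bayes_plausible mu0 P"
    by auto
  have sp: "space P = UNIV" using space_bp[OF P] .
  have ae: "AE x in P. 0 \<le> x \<and> x \<le> 1" and int: "integrable P (\<lambda>x. x)"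
    and m: "(\<integral>x. x \<partial>P) = mu0"
    using P unfolding bayes_plausible_def by auto
  have ae0: "AE x in P. 0 \<le> x" using ae by eventually_elim simp
  have "{nu. acts1 mu0 qhat astar nu} = {x \<in> space P. nuB mu0 qhat astar \<le> x}"
    using acts1_iff[OF assms(3)] sp by auto
  then have "x = measure P {x \<in> space P. nuB mu0 qhat astar \<le> x}" using x by simp
  also have "\<dots> \<le> (\<integral>x. x \<partial>P) / nuB mu0 qhat astar"
    by (rule integral_Markov_inequality_measure[where A="space P"]) (use int ae0 assms(4) in simp_all)
  also have "\<dots> = mu0 / nuB mu0 qhat astar" using m by simp
  finally show "x \<le> mu0 / nuB mu0 qhat astar" .
qed

lemma OPT_zero:
  assumes "0 < mu0" "mu0 < 1" "0 < astar" "1 < nuB mu0 qhat astar"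
  shows "OPT mu0 qhat astar = 0"
proof -
  have "{measure P {nu. acts1 mu0 qhat astar nu} |P. bayes_plausible mu0 P} = {0}"
  proof -
    have z: "measure P {nu. acts1 mu0 qhat astar nu} = 0" if P: "bayes_plausible mu0 P" for P
    proof -
      have sp: "space P = UNIV" using space_bp[OF P] .
      have set: "{nu. acts1 mu0 qhat astar nu} = {nuB mu0 qhat astar..}"
        using acts1_iff[OF assms(3)] by auto
      have sets: "{nuB mu0 qhat astar..} \<in> sets P" using P unfolding bayes_plausible_def by simp
      have ae0: "AE x in P. 0 \<le> x \<and> x \<le> 1" using P unfolding bayes_plausible_def by simp
      have ae: "AE x in P. x \<notin> {nuB mu0 qhat astar..}"
        using ae0 by eventually_elim (use assms(4) in auto)
      have "emeasure P {nuB mu0 qhat astar..} = 0"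
        using AE_iff_measurable[OF sets, of "\<lambda>x. x \<notin> {nuB mu0 qhat astar..}"] ae sp by auto
      then show ?thesis unfolding set measure_def by simp
    qed
    have bp: "bayes_plausible mu0 (return borel mu0)" using return_bp[of mu0] assms by auto
    show ?thesis
    proof
      show "{measure P {nu. acts1 mu0 qhat astar nu} |P. bayes_plausible mu0 P} \<subseteq> {0}"
        using z by auto
      show "{0} \<subseteq> {measure P {nu. acts1 mu0 qhat astar nu} |P. bayes_plausible mu0 P}"
      proof -
        have "0 = measure (return borel mu0) {nu. acts1 mu0 qhat astar nu} \<and>
            bayes_plausible mu0 (return borel mu0)" using z[OF bp] bp by simp
        then show ?thesis by blast
      qed
    qed
  qed
  then show ?thesis unfolding OPT_def by simp
qed

lemma lin_aux:
  fixes R N A A' B K x y :: real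
  shows "A \<le> A' \<Longrightarrow> N \<le> 2 * x + 1 \<Longrightarrow> 1 + K \<le> y \<Longrightarrow> Z = 2 * x + y
    \<Longrightarrow> R \<le> N + A + B \<Longrightarrow> K = A' + B \<Longrightarrow> R \<le> Z"
  by linarith

theorem proposition3p1:
  fixes mu0 qhat :: real
  assumes "0 < mu0" and "mu0 < qhat" and "qhat < 1"
  shows "(\<exists>C::real. \<forall>T::nat. \<forall>astar::real. T \<ge> 2 \<longrightarrow> 0 < astar \<longrightarrow> astar \<le> 1 \<longrightarrow>
            regret_BS mu0 qhat T astar \<le> C * ln (real T))
       \<and> (\<forall>T::nat. \<forall>astar::real. T \<ge> 2 \<longrightarrow> alpha_min mu0 qhat \<le> astar \<longrightarrow> astar \<le> 1 \<longrightarrow>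
            regret_BS mu0 qhat T astar
              \<le> real (nat \<lceil>2 * log 2 (real T)\<rceil>)
                 + ((1 - mu0)\<^sup>2 / (qhat - mu0)) * (1 - alpha_min mu0 qhat) / nuB mu0 qhat astar
                 + (mu0 * (1 - mu0)\<^sup>2 / (qhat - mu0)) * (1 - alpha_min mu0 qhat))
       \<and> (\<forall>T::nat. \<forall>astar::real. T \<ge> 2 \<longrightarrow> 0 < astar \<longrightarrow> astar < alpha_min mu0 qhat \<longrightarrow>
            regret_BS mu0 qhat T astar = 0)"
proof -
  define am where "am = alpha_min mu0 qhat"
  define Lnu where "Lnu = (1 - mu0)\<^sup>2 / (qhat - mu0)"
  define LW where "LW = mu0 * (1 - mu0)\<^sup>2 / (qhat - mu0)"
  have am: "0 < am" "am < 1" using am_pos[OF assms] am_lt1[OF assms] am_def by auto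
  have Lnu: "0 < Lnu" unfolding Lnu_def using assms by simp
  have LW: "0 < LW" unfolding LW_def using assms by simp
  have mu1: "mu0 < 1" using assms by simp
  have part2: "regret_BS mu0 qhat T astar
              \<le> real (nat \<lceil>2 * log 2 (real T)\<rceil>) + Lnu * (1 - am) / nuB mu0 qhat astar + LW * (1 - am)"
    if T: "T \<ge> 2" and a: "am \<le> astar" "astar \<le> 1" for T astar
  proof -
    define M where "M = bs_M T"
    have ap: "0 < astar" using a am by linarith
    have nus: "qhat \<le> nuB mu0 qhat astar" using nuB_ge[OF assms ap a(2)] .
    have nuspos: "0 < nuB mu0 qhat astar" using nus assms by linarith
    have opt: "OPT mu0 qhat astar \<le> mu0 / nuB mu0 qhat astar"
      using OPT_le[OF assms(1) mu1 ap nuspos] .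
    have mb: "real T * (mu0 / nuB mu0 qhat astar) - bs_value mu0 qhat astar M T (am, 1, 0)
      \<le> real (M - 0) + Lnu * (1 - am) / nuB mu0 qhat astar + real T * (LW * (1 - am) / 2 ^ M)"
      using main_bound[OF assms a[unfolded am_def], where lo=am and hi=1 and k=0 and n=T and M=M] a am
      unfolding Lnu_def LW_def am_def by simp
    have TM: "real T \<le> 2 ^ M"
    proof -
      have l0: "0 \<le> log 2 (real T)" using T by simp
      have "log 2 (real T) \<le> real M" unfolding M_def bs_M_def
        using l0 le_of_int_ceiling[of "2 * log 2 (real T)"] by linarith
      then have "2 powr log 2 (real T) \<le> 2 powr real M" by (intro powr_mono) auto
      then show ?thesis using T by (simp add: powr_realpow)
    qed
    have "real T * (LW * (1 - am) / 2 ^ M) = (real T / 2 ^ M) * (LW * (1 - am))" by simp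
    also have "\<dots> \<le> 1 * (LW * (1 - am))"
      using TM LW am by (intro mult_right_mono) auto
    finally have E: "real T * (LW * (1 - am) / 2 ^ M) \<le> LW * (1 - am)" by simp
    have "regret_BS mu0 qhat T astar \<le> real T * (mu0 / nuB mu0 qhat astar) - bs_value mu0 qhat astar M T (am, 1, 0)"
      unfolding regret_BS_def M_def am_def using opt by (intro diff_right_mono mult_left_mono) auto
    then show ?thesis using mb E unfolding M_def bs_M_def by simp
  qed
  have part3: "regret_BS mu0 qhat T astar = 0" if "0 < astar" "astar < am" for T astar
  proof -
    have "1 < nuB mu0 qhat astar"
    proof -
      have "(qhat - mu0) / am < (qhat - mu0) / astar" using that assms by (intro divide_strict_left_mono) auto
      moreover have "(qhat - mu0) / am = 1 - mu0" unfolding am_def alpha_min_def using assms by simp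
      ultimately show ?thesis unfolding nuB_def by simp
    qed
    then have "OPT mu0 qhat astar = 0" using OPT_zero[OF assms(1) mu1 that(1)] by simp
    moreover have "bs_value mu0 qhat astar (bs_M T) T (am, 1, 0) = 0"
      using value_zero[OF assms that[unfolded am_def]] am unfolding am_def by simp
    ultimately show ?thesis unfolding regret_BS_def am_def by simp
  qed
  define K where "K = Lnu * (1 - am) / qhat + LW * (1 - am)"
  have K: "0 \<le> K" unfolding K_def using Lnu LW am assms by simp
  have part1: "regret_BS mu0 qhat T astar \<le> ((3 + K) / ln 2) * ln (real T)"
    if T: "T \<ge> 2" and a: "0 < astar" "astar \<le> 1" for T astar
  proof -
    define x where "x = ln (real T) / ln 2"
    have x1: "1 \<le> x" unfolding x_def using T by simp
    have C: "((3 + K) / ln 2) * ln (real T) = (3 + K) * x" unfolding x_def by simp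
    show ?thesis
    proof (cases "am \<le> astar")
      case True
      have nus: "qhat \<le> nuB mu0 qhat astar" using nuB_ge[OF assms a] .
      have "Lnu * (1 - am) / nuB mu0 qhat astar \<le> Lnu * (1 - am) / qhat"
        using nus Lnu am assms by (intro divide_left_mono) auto
      moreover have "real (nat \<lceil>2 * log 2 (real T)\<rceil>) \<le> 2 * x + 1"
      proof -
        have "0 \<le> log 2 (real T)" using T by simp
        then show ?thesis unfolding x_def log_def
          using of_int_ceiling_le_add_one[of "2 * (ln (real T) / ln 2)"] by simp
      qed
      moreover have "1 + K \<le> (1 + K) * x"
        using mult_left_mono[OF x1, of "1 + K"] K by simp
      moreover have "(3 + K) * x = 2 * x + (1 + K) * x" by (simp add: algebra_simps)
      moreover note part2[OF T True a(2)]
      moreover have "K = Lnu * (1 - am) / qhat + LW * (1 - am)" by (rule K_def)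
      ultimately show ?thesis unfolding C by (rule lin_aux)
    next
      case False
      then show ?thesis using part3[OF a(1)] x1 K C by simp
    qed
  qed
  show ?thesis
  proof (intro conjI)
    show "\<exists>C::real. \<forall>T::nat. \<forall>astar::real. T \<ge> 2 \<longrightarrow> 0 < astar \<longrightarrow> astar \<le> 1 \<longrightarrow>
            regret_BS mu0 qhat T astar \<le> C * ln (real T)"
      by (intro exI[of _ "(3 + K) / ln 2"] allI impI, rule part1) auto
    show "\<forall>T::nat. \<forall>astar::real. T \<ge> 2 \<longrightarrow> alpha_min mu0 qhat \<le> astar \<longrightarrow> astar \<le> 1 \<longrightarrow>
            regret_BS mu0 qhat T astar
              \<le> real (nat \<lceil>2 * log 2 (real T)\<rceil>)
                 + ((1 - mu0)\<^sup>2 / (qhat - mu0)) * (1 - alpha_min mu0 qhat) / nuB mu0 qhat astar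
                 + (mu0 * (1 - mu0)\<^sup>2 / (qhat - mu0)) * (1 - alpha_min mu0 qhat)"
      by (intro allI impI, rule part2[unfolded Lnu_def LW_def am_def]) auto
    show "\<forall>T::nat. \<forall>astar::real. T \<ge> 2 \<longrightarrow> 0 < astar \<longrightarrow> astar < alpha_min mu0 qhat \<longrightarrow>
            regret_BS mu0 qhat T astar = 0"
      by (intro allI impI, rule part3[unfolded am_def]) auto
  qed
qed

end
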